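(* Let $X=(X_1,X_2)$ be a nonnegative bivariate random vector with absolutely continuous distribution function $F$ supported in $(0,b_1)\times(0,b_2)$, $0<b_i<\infty$, with finite $\overline\varepsilon^*_i(X;t_1,t_2)$. Then there exist functions $c_1(\cdot),c_2(\cdot)$ with values in $(0,1)$ such that $$\overline\varepsilon^*_i(X;t_1,t_2)=c_i(t_j)\,m_i^X(t_1,t_2),\qquad i,j\in\{1,2\},\ i\ne j,$$ for all $(t_1,t_2)\in(0,b_1)\times(0,b_2)$ (so $c_i$ depends on $t_j$ only, not on $t_i$), if and only if $F$ is the bivariate power distribution $$F(t_1,t_2)=\left(\frac{t_1}{b_1}\right)^{c_1}\left(\frac{t_2}{b_2}\right)^{c_2+\theta\log(t_1/b_1)},\qquad 0<t_i<b_i,$$ for some $\theta\le0$ and constants $c_1,c_2>0$; in this case $c_i=\dfrac{c_i(b_j)}{1-c_i(b_j)}$.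
   Context: Let $F(x_1,x_2)=P(X_1\le x_1,X_2\le x_2)$. For $t_1,t_2>0$ with $F(t_1,t_2)>0$ define the conditional dynamic cumulative past entropies (CDCPE) $$\overline\varepsilon^*_1(X;t_1,t_2)=-\int_0^{t_1}\frac{F(x_1,t_2)}{F(t_1,t_2)}\log\frac{F(x_1,t_2)}{F(t_1,t_2)}dx_1,\qquad \overline\varepsilon^*_2(X;t_1,t_2)=-\int_0^{t_2}\frac{F(t_1,x_2)}{F(t_1,t_2)}\log\frac{F(t_1,x_2)}{F(t_1,t_2)}dx_2,$$ and the components of the bivariate expected inactivity time $m_1^X(t_1,t_2)=\frac{1}{F(t_1,t_2)}\int_0^{t_1}F(x_1,t_2)dx_1$, $m_2^X(t_1,t_2)=\frac{1}{F(t_1,t_2)}\int_0^{t_2}F(t_1,x_2)dx_2$. The values $c_i(b_j)$ are understood as the limits of $c_i(t_j)$ as $t_j\to b_j$. *)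

theory Defs
  imports "HOL-Probability.Probability"
begin

definition bcdf :: "(real \<times> real) measure \<Rightarrow> real \<Rightarrow> real \<Rightarrow> real" where
  "bcdf \<mu> x1 x2 = measure \<mu> ({..x1} \<times> {..x2})"

definition cdcpe1_integrand :: "(real \<Rightarrow> real \<Rightarrow> real) \<Rightarrow> real \<Rightarrow> real \<Rightarrow> real \<Rightarrow> real" where
  "cdcpe1_integrand F t1 t2 x1 = (F x1 t2 / F t1 t2) * ln (F x1 t2 / F t1 t2)"

definition cdcpe2_integrand :: "(real \<Rightarrow> real \<Rightarrow> real) \<Rightarrow> real \<Rightarrow> real \<Rightarrow> real \<Rightarrow> real" where
  "cdcpe2_integrand F t1 t2 x2 = (F t1 x2 / F t1 t2) * ln (F t1 x2 / F t1 t2)"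

definition cdcpe1 :: "(real \<Rightarrow> real \<Rightarrow> real) \<Rightarrow> real \<Rightarrow> real \<Rightarrow> real" where
  "cdcpe1 F t1 t2 = - (LBINT x1=0..t1. cdcpe1_integrand F t1 t2 x1)"

definition cdcpe2 :: "(real \<Rightarrow> real \<Rightarrow> real) \<Rightarrow> real \<Rightarrow> real \<Rightarrow> real" where
  "cdcpe2 F t1 t2 = - (LBINT x2=0..t2. cdcpe2_integrand F t1 t2 x2)"

definition mit1 :: "(real \<Rightarrow> real \<Rightarrow> real) \<Rightarrow> real \<Rightarrow> real \<Rightarrow> real" where
  "mit1 F t1 t2 = (LBINT x1=0..t1. F x1 t2) / F t1 t2"

definition mit2 :: "(real \<Rightarrow> real \<Rightarrow> real) \<Rightarrow> real \<Rightarrow> real \<Rightarrow> real" where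
  "mit2 F t1 t2 = (LBINT x2=0..t2. F t1 x2) / F t1 t2"

end

theory Submission
  imports Defs "HOL-Real_Asymp.Real_Asymp"
begin


lemma pint1:
  fixes k t :: real assumes k: "0 < k" and t: "0 < t"
  shows "(LBINT x=0..t. exp (k*(ln x - ln t))) = t/(k+1)"
proof -
  let ?F = "\<lambda>x. x * exp (k*(ln x - ln t)) / (k+1)"
  have "(LBINT x=ereal 0..ereal t. exp (k*(ln x - ln t))) = t/(k+1) - 0"
  proof (rule interval_integral_FTC_nonneg(2))
    show "ereal 0 < ereal t" using t by simp
    fix x assume x: "ereal 0 < ereal x" "ereal x < ereal t"
    then have "x > 0" by simp
    then show "DERIV ?F x :> exp (k*(ln x - ln t))"
      using k by (auto intro!: derivative_eq_intros simp: field_simps)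
        (subst divide_eq_eq, auto simp: algebra_simps, smt (verit) mult_pos_pos)
    show "isCont (\<lambda>x. exp (k*(ln x - ln t))) x" using \<open>x>0\<close> by (auto intro!: continuous_intros)
  next
    show "AE x in lborel. ereal 0 < ereal x \<longrightarrow> ereal x < ereal t \<longrightarrow> 0 \<le> exp (k*(ln x - ln t))" by simp
    have "(?F \<longlongrightarrow> 0) (at_right 0)" using k t by real_asymp
    then show "((?F \<circ> real_of_ereal) \<longlongrightarrow> 0) (at_right (ereal 0))"
      by (simp add: ereal_tendsto_simps)
    have "(?F \<longlongrightarrow> t/(k+1)) (at_left t)" using k t 
      by (auto intro!: tendsto_eq_intros)
    then show "((?F \<circ> real_of_ereal) \<longlongrightarrow> t/(k+1)) (at_left (ereal t))"
      by (simp add: ereal_tendsto_simps)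
  qed
  then show ?thesis by (simp add: zero_ereal_def)
qed

lemma pint2:
  fixes k t :: real assumes k: "0 < k" and t: "0 < t"
  shows "(LBINT x=0..t. exp (k*(ln x - ln t)) * (k*(ln x - ln t))) = - (t*k/(k+1)^2)"
proof -
  define a where "a = k/(k+1)^2"
  define b where "b = k/(k+1)"
  have ha: "(k+1)*a = b" and hb: "(k+1)*b = k" using k by (auto simp: a_def b_def power2_eq_square)
  let ?F = "\<lambda>x. x * exp (k*(ln x - ln t)) * (a - b*(ln x - ln t))"
  let ?f = "\<lambda>x. - (exp (k*(ln x - ln t)) * (k*(ln x - ln t)))"
  have "(LBINT x=ereal 0..ereal t. ?f x) = t*a - 0"
  proof (rule interval_integral_FTC_nonneg(2))
    show "ereal 0 < ereal t" using t by simp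
    fix x assume x: "ereal 0 < ereal x" "ereal x < ereal t"
    then have "x > 0" by simp
    have "DERIV ?F x :> (1 * exp (k*(ln x - ln t)) + x * (exp (k*(ln x - ln t)) * (k * (1/x - 0)))) * (a - b*(ln x - ln t)) + x * exp (k*(ln x - ln t)) * (0 - b * (1/x - 0))"
      using \<open>x>0\<close> by (intro derivative_eq_intros refl) auto
    moreover have "(1 * exp (k*(ln x - ln t)) + x * (exp (k*(ln x - ln t)) * (k * (1/x - 0)))) * (a - b*(ln x - ln t)) + x * exp (k*(ln x - ln t)) * (0 - b * (1/x - 0))
       = exp (k*(ln x - ln t)) * (((k+1)*a - b) - (k+1)*b*(ln x - ln t))"
      using \<open>x>0\<close> by (simp add: field_simps)
    ultimately show "DERIV ?F x :> ?f x" by (simp add: ha hb)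
    show "isCont ?f x" using \<open>x>0\<close> by (auto intro!: continuous_intros)
  next
    show "AE x in lborel. ereal 0 < ereal x \<longrightarrow> ereal x < ereal t \<longrightarrow> 0 \<le> ?f x"
    proof (rule AE_I2, intro impI)
      fix x assume "ereal 0 < ereal x" "ereal x < ereal t"
      then have "0 < x" "x < t" by auto
      then have "ln x - ln t \<le> 0" by simp
      then show "0 \<le> ?f x" using k by (simp add: mult_nonneg_nonpos)
    qed
    have "(?F \<longlongrightarrow> 0) (at_right 0)" using k t by real_asymp
    then show "((?F \<circ> real_of_ereal) \<longlongrightarrow> 0) (at_right (ereal 0))"
      by (simp add: ereal_tendsto_simps)
    have "(?F \<longlongrightarrow> t * exp (k*(ln t - ln t)) * (a - b*(ln t - ln t))) (at_left t)" 
      by (intro tendsto_intros) (use t in auto)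
    then show "((?F \<circ> real_of_ereal) \<longlongrightarrow> t*a) (at_left (ereal t))"
      by (simp add: ereal_tendsto_simps)
  qed
  then have "(LBINT x=0..t. ?f x) = t*k/(k+1)^2" by (simp add: zero_ereal_def a_def)
  then show ?thesis by (simp add: interval_lebesgue_integral_uminus)
qed

lemma power_section:
  fixes G :: "real \<Rightarrow> real" and k t A :: real
  assumes k: "0<k" and t: "0<t" and A: "0<A"
    and G: "\<And>x. 0<x \<Longrightarrow> x \<le> t \<Longrightarrow> G x = A * exp (k*(ln x - ln t))"
  shows "-(LBINT x=0..t. (G x / G t) * ln (G x / G t)) = k/(k+1) * ((LBINT x=0..t. G x)/G t)"
    and "(LBINT x=0..t. G x)/G t = t/(k+1)"
proof -
  have Gt: "G t = A" using G[of t] t by simp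
  have e: "x \<in> einterval (min 0 (ereal t)) (max 0 (ereal t)) \<Longrightarrow> 0 < x \<and> x < t" for x
    using t by (auto simp: einterval_iff zero_ereal_def min_def max_def)
  have "(LBINT x=0..t. G x) = (LBINT x=0..t. A * exp (k*(ln x - ln t)))"
  proof (rule interval_integral_cong)
    fix x assume "x \<in> einterval (min 0 (ereal t)) (max 0 (ereal t))"
    then have x: "0 < x" "x < t" using e by blast+
    then show "G x = A * exp (k*(ln x - ln t))" using G by simp
  qed
  also have "\<dots> = A * (t/(k+1))" using pint1[OF k t] by simp
  finally have I1: "(LBINT x=0..t. G x) = A * (t/(k+1))" .
  have "(LBINT x=0..t. (G x / G t) * ln (G x / G t)) = (LBINT x=0..t. exp (k*(ln x - ln t)) * (k*(ln x - ln t)))"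
  proof (rule interval_integral_cong)
    fix x assume "x \<in> einterval (min 0 (ereal t)) (max 0 (ereal t))"
    then have x: "0 < x" "x < t" using e by blast+
    then show "(G x / G t) * ln (G x / G t) = exp (k*(ln x - ln t)) * (k*(ln x - ln t))"
      using G[of x] Gt A by simp
  qed
  also have "\<dots> = - (t*k/(k+1)^2)" using pint2[OF k t] by simp
  finally have I2: "(LBINT x=0..t. (G x / G t) * ln (G x / G t)) = - (t*k/(k+1)^2)" .
  show "(LBINT x=0..t. G x)/G t = t/(k+1)" using I1 Gt A by simp
  show "-(LBINT x=0..t. (G x / G t) * ln (G x / G t)) = k/(k+1) * ((LBINT x=0..t. G x)/G t)"
    unfolding I2 unfolding I1 Gt using A k by (simp add: power2_eq_square)
qed



lemma xlnx_bound:
  fixes u :: real assumes "0 \<le> u" "u \<le> 1" shows "\<bar>u * ln u\<bar> \<le> 1"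
proof (cases "u = 0")
  case True then show ?thesis by simp
next
  case False
  then have u: "0 < u" using assms by simp
  have "ln (1/u) \<le> 1/u - 1" using u by (intro ln_le_minus_one) simp
  then have "- ln u \<le> 1/u - 1" using u by (simp add: ln_div)
  then have "u * (- ln u) \<le> u * (1/u - 1)" using u by (intro mult_left_mono) auto
  then have "- (u * ln u) \<le> 1 - u" using u by (simp add: algebra_simps)
  moreover have "ln u \<le> 0" using u assms by simp
  then have "u * ln u \<le> 0" using u by (simp add: mult_nonneg_nonpos)
  ultimately show ?thesis using u by linarith
qed

lemma si_bounded:
  fixes f :: "real \<Rightarrow> real"
  assumes "f \<in> borel_measurable borel" "\<And>x. x \<in> {u<..<v} \<Longrightarrow> \<bar>f x\<bar> \<le> B"
  shows "set_integrable lborel {u<..<v} f"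
  unfolding set_integrable_def
proof (rule integrableI_bounded_set_indicator[where B=B])
  show "emeasure lborel {u<..<v} < \<infinity>"
  proof (cases "u \<le> v")
    case True then show ?thesis by simp
  next
    case False then have "{u<..<v} = {}" by auto
    then show ?thesis by simp
  qed
qed (use assms in auto)

lemma lbint_eq_integral:
  fixes f :: "real \<Rightarrow> real"
  assumes "0 < t" "set_integrable lborel {0<..<t} f"
  shows "(LBINT x=0..t. f x) = integral {0..t} f" "f integrable_on {0..t}"
proof -
  have e: "einterval 0 (ereal t) = {0<..<t}" by (simp add: zero_ereal_def)
  have "(LBINT x=0..t. f x) = integral (einterval 0 (ereal t)) f"
    by (rule interval_integral_eq_integral') (use assms e in auto)
  then show "(LBINT x=0..t. f x) = integral {0..t} f"
    using e by (metis integral_open_interval_real)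
  show "f integrable_on {0..t}"
    using set_borel_integral_eq_integral(1)[OF assms(2)] integrable_on_Icc_iff_Ioo by blast
qed

lemma indef_cont:
  fixes f :: "real \<Rightarrow> real"
  assumes "f integrable_on {0..\<beta>}" "0 < t" "t < \<beta>"
  shows "isCont (\<lambda>u. integral {0..u} f) t"
proof -
  have "continuous_on {0..\<beta>} (\<lambda>u. integral {0..u} f)"
    by (rule indefinite_integral_continuous_1) fact
  then have "continuous_on {0<..<\<beta>} (\<lambda>u. integral {0..u} f)"
    by (rule continuous_on_subset) auto
  moreover have "open {0<..<\<beta>}" by simp
  ultimately show ?thesis using assms continuous_on_eq_continuous_at[of "{0<..<\<beta>}" "\<lambda>u. integral {0..u} f"] by auto
qed

lemma indef_deriv:
  fixes f :: "real \<Rightarrow> real"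
  assumes "f integrable_on {0..\<beta>}" "0 < t" "t < \<beta>" "isCont f t"
  shows "((\<lambda>u. integral {0..u} f) has_real_derivative f t) (at t)"
proof -
  have "((\<lambda>u. integral {0..u} f) has_vector_derivative f t) (at t within ({0..\<beta>} - {}))"
    by (rule integral_has_vector_derivative_continuous_at)
       (use assms in \<open>auto intro: continuous_at_imp_continuous_at_within\<close>)
  then have "((\<lambda>u. integral {0..u} f) has_vector_derivative f t) (at t within {0<..<\<beta>})"
    by (rule has_vector_derivative_within_subset) auto
  then have "((\<lambda>u. integral {0..u} f) has_vector_derivative f t) (at t)"
    using has_vector_derivative_within_open[of t "{0<..<\<beta>}"] assms by auto
  then show ?thesis by (simp add: has_real_derivative_iff_has_vector_derivative)
qed



lemma ode_char:
  fixes G :: "real \<Rightarrow> real" and b c :: real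
  assumes b: "0 < b" and c: "0 < c" "c < 1" and mono: "mono G"
    and nn: "\<And>x. 0 \<le> G x" and le1: "\<And>x. G x \<le> 1"
    and pos: "\<And>x. 0 < x \<Longrightarrow> x < b \<Longrightarrow> 0 < G x"
    and rel: "\<And>t. 0 < t \<Longrightarrow> t < b \<Longrightarrow>
       -(LBINT x=0..t. (G x / G t) * ln (G x / G t)) = c * ((LBINT x=0..t. G x) / G t)"
  shows "\<exists>\<alpha>. \<forall>t. 0 < t \<longrightarrow> t < b \<longrightarrow> ln (G t) = \<alpha> + c/(1-c) * ln t"
proof -
  have Gm[measurable]: "G \<in> borel_measurable borel" by (rule borel_measurable_mono[OF mono])
  define H where "H t = integral {0..t} G" for t
  define J where "J t = integral {0..t} (\<lambda>x. G x * ln (G x))" for t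
  have siG: "set_integrable lborel {0<..<t} G" for t
    by (rule si_bounded[where B=1]) (use nn le1 in auto)
  have siGl: "set_integrable lborel {0<..<t} (\<lambda>x. G x * ln (G x))" for t
    by (rule si_bounded[where B=1]) (use nn le1 xlnx_bound in auto)
  have intG: "G integrable_on {0..t}" if "0 < t" for t using lbint_eq_integral(2)[OF that siG] .
  have intGl: "(\<lambda>x. G x * ln (G x)) integrable_on {0..t}" if "0 < t" for t
    using lbint_eq_integral(2)[OF that siGl] .
  have KR: "ln (G t) * H t = c * H t + J t" if t: "0 < t" "t < b" for t
  proof -
    have Gt: "0 < G t" using pos t by simp
    have siR: "set_integrable lborel {0<..<t} (\<lambda>x. (G x / G t) * ln (G x / G t))"
    proof (rule si_bounded[where B=1])
      fix x assume "x \<in> {0<..<t}"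
      then have "G x \<le> G t" using mono by (auto simp: mono_def)
      then show "\<bar>G x / G t * ln (G x / G t)\<bar> \<le> 1" using Gt nn[of x]
        by (intro xlnx_bound) auto
    qed measurable
    have "(LBINT x=0..t. (G x / G t) * ln (G x / G t)) = integral {0..t} (\<lambda>x. (G x / G t) * ln (G x / G t))"
      by (rule lbint_eq_integral(1)[OF t(1) siR])
    also have "\<dots> = integral {0<..<t} (\<lambda>x. (G x / G t) * ln (G x / G t))"
      by (rule integral_open_interval_real)
    also have "\<dots> = integral {0<..<t} (\<lambda>x. (1 / G t) * (G x * ln (G x)) - (ln (G t) / G t) * G x)"
    proof (rule integral_cong)
      fix x assume "x \<in> {0<..<t}"
      then have "0 < G x" using pos t by auto
      then show "(G x / G t) * ln (G x / G t) = (1 / G t) * (G x * ln (G x)) - (ln (G t) / G t) * G x"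
        using Gt by (simp add: ln_div field_simps)
    qed
    also have "\<dots> = (1 / G t) * integral {0<..<t} (\<lambda>x. G x * ln (G x)) - (ln (G t) / G t) * integral {0<..<t} G"
    proof -
      have i1: "(\<lambda>x. G x * ln (G x)) integrable_on {0<..<t}" "G integrable_on {0<..<t}"
        using intGl[OF t(1)] intG[OF t(1)] by (simp_all add: integrable_on_Icc_iff_Ioo)
      show ?thesis
        apply (subst integral_diff)
          apply (rule integrable_on_mult_right, rule i1(1))
         apply (rule integrable_on_mult_right, rule i1(2))
        apply simp
        done
    qed
    also have "\<dots> = (1 / G t) * J t - (ln (G t) / G t) * H t"
      by (simp add: J_def H_def integral_open_interval_real)
    finally have A: "(LBINT x=0..t. (G x / G t) * ln (G x / G t)) = (1 / G t) * J t - (ln (G t) / G t) * H t" .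
    have B: "(LBINT x=0..t. G x) = H t" unfolding H_def by (rule lbint_eq_integral(1)[OF t(1) siG])
    from rel[OF t] A B have "-((1 / G t) * J t - (ln (G t) / G t) * H t) = c * (H t / G t)" by simp
    then have "G t * (ln (G t) * H t) = G t * (c * H t + J t)" using Gt by (simp add: field_simps)
    then show ?thesis using Gt by simp
  qed
  have Hle: "H t \<le> t" if t: "0 < t" for t
  proof -
    have "H t \<le> integral {0..t} (\<lambda>_. 1::real)"
      unfolding H_def by (rule integral_le[OF intG[OF t]]) (use le1 in auto)
    then show ?thesis using t by simp
  qed
  have Hpos: "0 < H t" if t: "0 < t" "t < b" for t
  proof -
    have i: "G integrable_on {0..t/2}" "G integrable_on {t/2..t}"
      by (rule integrable_on_subinterval[OF intG[OF t(1)]], use t in auto)+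
    have "0 \<le> integral {0..t/2} G" by (rule integral_nonneg[OF i(1)]) (use nn in auto)
    moreover have "integral {t/2..t} (\<lambda>_. G (t/2)) \<le> integral {t/2..t} G"
      by (rule integral_le[OF _ i(2)]) (use mono in \<open>auto simp: mono_def\<close>)
    moreover have "integral {t/2..t} (\<lambda>_. G (t/2)) = (t/2) * G (t/2)" using t by simp
    moreover have "0 < (t/2) * G (t/2)" using t pos[of "t/2"] by simp
    moreover have "integral {0..t/2} G + integral {t/2..t} G = H t"
      unfolding H_def by (rule Henstock_Kurzweil_Integration.integral_combine[OF _ _ intG[OF t(1)]]) (use t in auto)
    ultimately show ?thesis by linarith
  qed
  have lnG: "ln (G t) = c + J t / H t" if t: "0 < t" "t < b" for t
    using KR[OF t] Hpos[OF t] by (simp add: field_simps)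
  have Hc: "isCont H t" and Jc: "isCont J t" if t: "0 < t" "t < b" for t
  proof -
    have "0 < (t+b)/2" "t < (t+b)/2" using t by auto
    then show "isCont H t" "isCont J t" unfolding H_def J_def
      by (intro indef_cont[OF intG] indef_cont[OF intGl] t(1); simp)+
  qed
  have Gc: "isCont G t" if t: "0 < t" "t < b" for t
  proof -
    have ev: "eventually (\<lambda>s. s \<in> {0<..<b}) (nhds t)"
      by (rule eventually_nhds_in_open) (use t in auto)
    have "eventually (\<lambda>s. G s = exp (c + J s / H s)) (nhds t)"
      by (rule eventually_mono[OF ev]) (use lnG pos in \<open>auto simp flip: lnG\<close>)
    then have "isCont G t \<longleftrightarrow> isCont (\<lambda>s. exp (c + J s / H s)) t" by (rule isCont_cong)
    moreover have "isCont (\<lambda>s. exp (c + J s / H s)) t"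
      using Hc[OF t] Jc[OF t] Hpos[OF t] by (auto intro!: continuous_intros)
    ultimately show ?thesis by blast
  qed
  have Hd: "DERIV H t :> G t" and Jd: "DERIV J t :> G t * ln (G t)" if t: "0 < t" "t < b" for t
  proof -
    have b2: "0 < (t+b)/2" "t < (t+b)/2" using t by auto
    have "isCont (\<lambda>x. G x * ln (G x)) t"
      using Gc[OF t] pos[OF t] by (auto intro!: continuous_intros)
    then show "DERIV J t :> G t * ln (G t)" unfolding J_def
      by (rule indef_deriv[OF intGl[OF b2(1)] t(1) b2(2)])
    show "DERIV H t :> G t" unfolding H_def
      by (rule indef_deriv[OF intG[OF b2(1)] t(1) b2(2) Gc[OF t]])
  qed
  have zd: "DERIV (\<lambda>s. ln (G s) - c * ln (H s)) t :> 0" if t: "0 < t" "t < b" for t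
  proof -
    have Hp: "0 < H t" using Hpos[OF t] .
    have e1: "DERIV (\<lambda>s. (c + J s / H s) - c * ln (H s)) t :>
        ((G t * ln (G t) * H t - J t * G t) / (H t * H t) - c * (G t / H t))"
      using Jd[OF t] Hd[OF t] Hp by (auto intro!: derivative_eq_intros simp: field_simps)
    have val: "(G t * ln (G t) * H t - J t * G t) / (H t * H t) - c * (G t / H t) = 0"
    proof -
      have JJ: "J t = ln (G t) * H t - c * H t" using KR[OF t] by simp
      show ?thesis unfolding JJ using Hp by (simp add: field_simps)
    qed
    have ev: "eventually (\<lambda>s. s \<in> {0<..<b}) (nhds t)"
      by (rule eventually_nhds_in_open) (use t in auto)
    have ev2: "eventually (\<lambda>s. ln (G s) - c * ln (H s) = (c + J s / H s) - c * ln (H s)) (nhds t)"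
      by (rule eventually_mono[OF ev]) (use lnG in auto)
    show ?thesis using e1 val DERIV_cong_ev[OF refl ev2 refl] by simp
  qed
  have "\<exists>z0. \<forall>s\<in>{0<..<b}. ln (G s) - c * ln (H s) = z0"
    by (rule has_field_derivative_zero_constant) (use zd in \<open>auto intro: has_field_derivative_at_within\<close>)
  then obtain z0 where z0: "\<And>s. s \<in> {0<..<b} \<Longrightarrow> ln (G s) - c * ln (H s) = z0" by blast
  define K where "K = exp z0"
  have Kp: "0 < K" by (simp add: K_def)
  have wd: "DERIV (\<lambda>s. exp ((1-c) * ln (H s)) - (1-c) * K * s) t :> 0" if t: "0 < t" "t < b" for t
  proof -
    have Hp: "0 < H t" using Hpos[OF t] .
    have e1: "DERIV (\<lambda>s. exp ((1-c) * ln (H s)) - (1-c) * K * s) t :>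
        exp ((1-c) * ln (H t)) * ((1-c) * (G t / H t)) - (1-c) * K"
      using Hd[OF t] Hp by (auto intro!: derivative_eq_intros)
    have Gt: "G t = exp (z0 + c * ln (H t))"
      using z0[of t] t pos[OF t] by (metis add_diff_cancel_left' diff_add_cancel exp_ln greaterThanLessThan_iff)
    have Ht: "H t = exp (ln (H t))" using Hp by simp
    have "exp ((1-c) * ln (H t)) * (G t / H t) = exp ((1-c) * ln (H t) + (z0 + c * ln (H t)) - ln (H t))"
      by (subst Gt, subst (2) Ht) (simp add: exp_add exp_diff)
    also have "\<dots> = K" by (simp add: K_def algebra_simps)
    finally have "exp ((1-c) * ln (H t)) * (G t / H t) = K" .
    moreover have "exp ((1-c) * ln (H t)) * ((1-c) * (G t / H t)) = (1-c) * (exp ((1-c) * ln (H t)) * (G t / H t))"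
      by (rule mult.left_commute)
    ultimately have "exp ((1-c) * ln (H t)) * ((1-c) * (G t / H t)) - (1-c) * K = 0"
      by simp
    then show ?thesis using e1 by simp
  qed
  have "\<exists>D. \<forall>s\<in>{0<..<b}. exp ((1-c) * ln (H s)) - (1-c) * K * s = D"
    by (rule has_field_derivative_zero_constant) (use wd in \<open>auto intro: has_field_derivative_at_within\<close>)
  then obtain D where D: "\<And>s. s \<in> {0<..<b} \<Longrightarrow> exp ((1-c) * ln (H s)) - (1-c) * K * s = D" by blast
  have c1: "0 < 1 - c" using c by simp
  have lim1: "((\<lambda>s. exp ((1-c) * ln s)) \<longlongrightarrow> 0) (at_right 0)" 
  proof -
    have "filterlim (\<lambda>s. (1-c) * ln s) at_bot (at_right 0)"
      by (rule filterlim_tendsto_pos_mult_at_bot[OF tendsto_const c1 ln_at_0])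
    then show ?thesis by (rule filterlim_compose[OF exp_at_bot])
  qed
  have ev0: "eventually (\<lambda>s. s \<in> {0<..<b}) (at_right 0)" using eventually_at_right_real[OF b] .
  have lim2: "((\<lambda>s. exp ((1-c) * ln (H s))) \<longlongrightarrow> 0) (at_right 0)"
  proof (rule tendsto_sandwich[OF _ _ tendsto_const lim1])
    show "eventually (\<lambda>s. 0 \<le> exp ((1-c) * ln (H s))) (at_right 0)" by simp
    show "eventually (\<lambda>s. exp ((1-c) * ln (H s)) \<le> exp ((1-c) * ln s)) (at_right 0)"
    proof (rule eventually_mono[OF ev0])
      fix s assume s: "s \<in> {0<..<b}"
      then have "ln (H s) \<le> ln s" using Hpos[of s] Hle[of s] by auto
      then have "(1-c) * ln (H s) \<le> (1-c) * ln s" using c by (intro mult_left_mono) auto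
      then show "exp ((1-c) * ln (H s)) \<le> exp ((1-c) * ln s)" by simp
    qed
  qed
  have "((\<lambda>s. exp ((1-c) * ln (H s)) - (1-c) * K * s) \<longlongrightarrow> 0 - (1-c) * K * 0) (at_right 0)"
    by (intro tendsto_intros lim2)
  then have "((\<lambda>s. exp ((1-c) * ln (H s)) - (1-c) * K * s) \<longlongrightarrow> 0) (at_right 0)" by simp
  moreover have "eventually (\<lambda>s. exp ((1-c) * ln (H s)) - (1-c) * K * s = D) (at_right 0)"
    by (rule eventually_mono[OF ev0]) (rule D)
  ultimately have "((\<lambda>_. D) \<longlongrightarrow> 0) (at_right (0::real))" by (rule tendsto_cong[THEN iffD1, rotated])
  then have D0: "D = 0" by (simp add: tendsto_const_iff)
  show ?thesis
  proof (intro exI allI impI)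
    fix t assume t: "0 < t" "t < b"
    have Hp: "0 < H t" using Hpos[OF t] .
    have "exp ((1-c) * ln (H t)) = (1-c) * K * t" using D[of t] D0 t by simp
    then have "(1-c) * ln (H t) = ln ((1-c) * K * t)" by (metis ln_exp)
    also have "\<dots> = ln ((1-c) * K) + ln t" using c Kp t by (simp add: ln_mult)
    finally have L: "ln (H t) = (ln ((1-c) * K) + ln t) / (1-c)" using c by (simp add: field_simps)
    have "ln (G t) = z0 + c * ln (H t)" using z0[of t] t by simp
    also have "\<dots> = z0 + c * ((ln ((1-c) * K) + ln t) / (1-c))" by (simp only: L)
    also have "\<dots> = (z0 + c / (1-c) * ln ((1-c) * K)) + c/(1-c) * ln t"
      by (simp add: add_divide_distrib distrib_left)
    finally show "ln (G t) = (z0 + c / (1-c) * ln ((1-c) * K)) + c/(1-c) * ln t" .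
  qed
qed



lemma pform:
  fixes x y b1 b2 c1 c2 \<theta> :: real
  assumes "0<x" "0<b1" "0<y" "0<b2"
  shows "(x/b1) powr c1 * (y/b2) powr (c2 + \<theta> * ln (x/b1)) =
     exp (c1*(ln x - ln b1) + (c2 + \<theta>*(ln x - ln b1))*(ln y - ln b2))"
  using assms by (simp add: powr_def ln_div exp_add mult.commute)

lemma section1:
  fixes F :: "real \<Rightarrow> real \<Rightarrow> real" and b1 b2 c1 c2 \<theta> t1 t2 :: real
  assumes b: "0<b1" "0<b2" and par: "\<theta> \<le> 0" "0 < c1" "0 < c2"
    and form: "\<forall>t1\<in>{0<..<b1}. \<forall>t2\<in>{0<..<b2}.
           F t1 t2 = (t1 / b1) powr c1 * (t2 / b2) powr (c2 + \<theta> * ln (t1 / b1))"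
    and t: "t1 \<in> {0<..<b1}" "t2 \<in> {0<..<b2}"
  shows "cdcpe1 F t1 t2 = (c1 + \<theta> * ln (t2/b2)) / (c1 + \<theta> * ln (t2/b2) + 1) * mit1 F t1 t2"
    "0 < mit1 F t1 t2" "0 < c1 + \<theta> * ln (t2/b2)"
    "cdcpe2 F t1 t2 = (c2 + \<theta> * ln (t1/b1)) / (c2 + \<theta> * ln (t1/b1) + 1) * mit2 F t1 t2"
    "0 < mit2 F t1 t2" "0 < c2 + \<theta> * ln (t1/b1)"
proof -
  have E: "F x y = exp (c1*(ln x - ln b1) + (c2 + \<theta>*(ln x - ln b1))*(ln y - ln b2))"
    if "x \<in> {0<..<b1}" "y \<in> {0<..<b2}" for x y
    using form that pform[of x b1 y b2 c1 c2 \<theta>] b by auto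
  have t0: "0 < t1" "t1 < b1" "0 < t2" "t2 < b2" using t by auto
  have l1: "ln (t1/b1) < 0" "ln (t2/b2) < 0" using t0 b by auto
  show k1: "0 < c1 + \<theta> * ln (t2/b2)" using par l1 by (smt (verit) mult_nonpos_nonpos)
  show k2: "0 < c2 + \<theta> * ln (t1/b1)" using par l1 by (smt (verit) mult_nonpos_nonpos)
  have A: "0 < F t1 t2" using E[OF t] by simp
  have s1: "F x t2 = F t1 t2 * exp ((c1 + \<theta> * ln (t2/b2)) * (ln x - ln t1))" if "0 < x" "x \<le> t1" for x
  proof -
    have xx: "x \<in> {0<..<b1}" using that t0 by auto
    have "F x t2 = exp ((c1*(ln t1 - ln b1) + (c2 + \<theta>*(ln t1 - ln b1))*(ln t2 - ln b2)) + (c1 + \<theta> * ln (t2/b2)) * (ln x - ln t1))"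
      unfolding E[OF xx t(2)] using b t0 by (intro arg_cong[where f=exp]) (simp add: ln_div algebra_simps)
    then show ?thesis unfolding E[OF t] by (simp add: exp_add)
  qed
  have s2: "F t1 y = F t1 t2 * exp ((c2 + \<theta> * ln (t1/b1)) * (ln y - ln t2))" if "0 < y" "y \<le> t2" for y
  proof -
    have yy: "y \<in> {0<..<b2}" using that t0 by auto
    have "F t1 y = exp ((c1*(ln t1 - ln b1) + (c2 + \<theta>*(ln t1 - ln b1))*(ln t2 - ln b2)) + (c2 + \<theta> * ln (t1/b1)) * (ln y - ln t2))"
      unfolding E[OF t(1) yy] using b t0 by (intro arg_cong[where f=exp]) (simp add: ln_div algebra_simps)
    then show ?thesis unfolding E[OF t] by (simp add: exp_add)
  qed
  note P1 = power_section[of "c1 + \<theta> * ln (t2/b2)" t1 "F t1 t2" "\<lambda>x. F x t2", OF k1 t0(1) A s1]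
  note P2 = power_section[of "c2 + \<theta> * ln (t1/b1)" t2 "F t1 t2" "\<lambda>y. F t1 y", OF k2 t0(3) A s2]
  show "cdcpe1 F t1 t2 = (c1 + \<theta> * ln (t2/b2)) / (c1 + \<theta> * ln (t2/b2) + 1) * mit1 F t1 t2"
    using P1(1) by (simp add: cdcpe1_def cdcpe1_integrand_def mit1_def)
  show "0 < mit1 F t1 t2" using P1(2) k1 t0 by (simp add: mit1_def)
  show "cdcpe2 F t1 t2 = (c2 + \<theta> * ln (t1/b1)) / (c2 + \<theta> * ln (t1/b1) + 1) * mit2 F t1 t2"
    using P2(1) by (simp add: cdcpe2_def cdcpe2_integrand_def mit2_def)
  show "0 < mit2 F t1 t2" using P2(2) k2 t0 by (simp add: mit2_def)
qed



lemma fwd_dir: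
  fixes \<mu> :: "(real \<times> real) measure" and b1 b2 :: real and F :: "real \<Rightarrow> real \<Rightarrow> real"
    and cf1 cf2 :: "real \<Rightarrow> real"
  assumes F_def: "F = bcdf \<mu>"
    and prob: "prob_space \<mu>"
    and sets_borel: "sets \<mu> = sets borel"
    and support: "measure \<mu> ({0<..<b1} \<times> {0<..<b2}) = 1"
    and b_pos: "0 < b1" "0 < b2"
    and F_pos: "\<And>t1 t2. 0 < t1 \<Longrightarrow> t1 < b1 \<Longrightarrow> 0 < t2 \<Longrightarrow> t2 < b2 \<Longrightarrow> 0 < F t1 t2"
    and CF: "(\<forall>t2\<in>{0<..<b2}. cf1 t2 \<in> {0<..<1}) \<and> (\<forall>t1\<in>{0<..<b1}. cf2 t1 \<in> {0<..<1}) \<and>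
        (\<forall>t1\<in>{0<..<b1}. \<forall>t2\<in>{0<..<b2}.
           cdcpe1 F t1 t2 = cf1 t2 * mit1 F t1 t2 \<and> cdcpe2 F t1 t2 = cf2 t1 * mit2 F t1 t2)"
  shows "\<exists>\<theta> c1 c2. \<theta> \<le> 0 \<and> 0 < c1 \<and> 0 < c2 \<and>
        (\<forall>t1\<in>{0<..<b1}. \<forall>t2\<in>{0<..<b2}.
           F t1 t2 = (t1 / b1) powr c1 * (t2 / b2) powr (c2 + \<theta> * ln (t1 / b1)))"
proof -
  interpret prob_space \<mu> by (rule prob)
  have sp: "space \<mu> = UNIV" using sets_eq_imp_space_eq[OF sets_borel] by simp
  have rs: "A \<times> B \<in> sets \<mu>" if "closed A" "closed B" for A B
    using sets_borel that by (simp add: borel_closed closed_Times)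
  have Fm: "F x y = measure \<mu> ({..x} \<times> {..y})" for x y by (simp add: F_def bcdf_def)
  have Fnn: "0 \<le> F x y" for x y by (simp add: Fm)
  have Fle1: "F x y \<le> 1" for x y by (simp add: Fm)
  have Fmono1: "mono (\<lambda>x. F x y)" for y
    unfolding mono_def Fm by (intro allI impI finite_measure_mono rs) auto
  have Fmono2: "mono (\<lambda>y. F x y)" for x
    unfolding mono_def Fm by (intro allI impI finite_measure_mono rs) auto
  define k1 where "k1 t2 = cf1 t2 / (1 - cf1 t2)" for t2
  define k2 where "k2 t1 = cf2 t1 / (1 - cf2 t1)" for t1
  have k1p: "0 < k1 t2" if "t2 \<in> {0<..<b2}" for t2 using CF that by (auto simp: k1_def)
  have k2p: "0 < k2 t1" if "t1 \<in> {0<..<b1}" for t1 using CF that by (auto simp: k2_def)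
  have "\<forall>t2\<in>{0<..<b2}. \<exists>\<alpha>. \<forall>t. 0 < t \<longrightarrow> t < b1 \<longrightarrow> ln (F t t2) = \<alpha> + k1 t2 * ln t"
  proof
    fix t2 assume t2: "t2 \<in> {0<..<b2}"
    show "\<exists>\<alpha>. \<forall>t. 0 < t \<longrightarrow> t < b1 \<longrightarrow> ln (F t t2) = \<alpha> + k1 t2 * ln t"
      unfolding k1_def
    proof (rule ode_char[of b1 "cf1 t2" "\<lambda>x. F x t2"])
      show "0 < cf1 t2" "cf1 t2 < 1" using CF t2 by auto
      fix t assume t: "0 < t" "t < b1"
      then show "0 < F t t2" using F_pos t2 by auto
      have "cdcpe1 F t t2 = cf1 t2 * mit1 F t t2" using CF t t2 by auto
      then show "-(LBINT x=0..t. (F x t2 / F t t2) * ln (F x t2 / F t t2)) = cf1 t2 * ((LBINT x=0..t. F x t2) / F t t2)"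
        by (simp add: cdcpe1_def cdcpe1_integrand_def mit1_def)
    qed (use b_pos Fmono1 Fnn Fle1 in auto)
  qed
  then obtain \<alpha>1 where A1: "\<And>t1 t2. t2 \<in> {0<..<b2} \<Longrightarrow> 0 < t1 \<Longrightarrow> t1 < b1 \<Longrightarrow> ln (F t1 t2) = \<alpha>1 t2 + k1 t2 * ln t1"
    by (metis bchoice)
  have "\<forall>t1\<in>{0<..<b1}. \<exists>\<alpha>. \<forall>t. 0 < t \<longrightarrow> t < b2 \<longrightarrow> ln (F t1 t) = \<alpha> + k2 t1 * ln t"
  proof
    fix t1 assume t1: "t1 \<in> {0<..<b1}"
    show "\<exists>\<alpha>. \<forall>t. 0 < t \<longrightarrow> t < b2 \<longrightarrow> ln (F t1 t) = \<alpha> + k2 t1 * ln t"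
      unfolding k2_def
    proof (rule ode_char[of b2 "cf2 t1" "\<lambda>y. F t1 y"])
      show "0 < cf2 t1" "cf2 t1 < 1" using CF t1 by auto
      fix t assume t: "0 < t" "t < b2"
      then show "0 < F t1 t" using F_pos t1 by auto
      have "cdcpe2 F t1 t = cf2 t1 * mit2 F t1 t" using CF t t1 by auto
      then show "-(LBINT x=0..t. (F t1 x / F t1 t) * ln (F t1 x / F t1 t)) = cf2 t1 * ((LBINT x=0..t. F t1 x) / F t1 t)"
        by (simp add: cdcpe2_def cdcpe2_integrand_def mit2_def)
    qed (use b_pos Fmono2 Fnn Fle1 in auto)
  qed
  then obtain \<alpha>2 where A2: "\<And>t1 t2. t1 \<in> {0<..<b1} \<Longrightarrow> 0 < t2 \<Longrightarrow> t2 < b2 \<Longrightarrow> ln (F t1 t2) = \<alpha>2 t1 + k2 t1 * ln t2"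
    by (metis bchoice)
  define p where "p = b1/2"
  define q where "q = b1/4"
  have pq: "p \<in> {0<..<b1}" "q \<in> {0<..<b1}" using b_pos by (auto simp: p_def q_def)
  define dl where "dl = ln p - ln q"
  have ln4: "ln (4::real) = 2 * ln 2"
    using ln_realpow[of 2 2] by simp
  have dl: "dl = ln 2" using b_pos ln4 by (simp add: dl_def p_def q_def ln_div)
  have dlp: "0 < dl" using dl by simp
  define A' where "A' = (\<alpha>2 p - \<alpha>2 q) / dl"
  define B' where "B' = (k2 p - k2 q) / dl"
  have k1form: "k1 t2 = A' + B' * ln t2" if t2: "t2 \<in> {0<..<b2}" for t2
  proof -
    have "\<alpha>1 t2 + k1 t2 * ln p = \<alpha>2 p + k2 p * ln t2"
      using A1[OF t2, of p] A2[OF pq(1), of t2] pq t2 by auto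
    moreover have "\<alpha>1 t2 + k1 t2 * ln q = \<alpha>2 q + k2 q * ln t2"
      using A1[OF t2, of q] A2[OF pq(2), of t2] pq t2 by auto
    ultimately have "k1 t2 * dl = (\<alpha>2 p - \<alpha>2 q) + (k2 p - k2 q) * ln t2"
      unfolding dl_def by (simp add: algebra_simps)
    then have "k1 t2 = ((\<alpha>2 p - \<alpha>2 q) + (k2 p - k2 q) * ln t2) / dl" using dlp by (simp add: eq_divide_eq)
    then show ?thesis unfolding A'_def B'_def by (simp add: add_divide_distrib)
  qed
  have Lform: "ln (F t1 t2) = \<alpha>2 p + k2 p * ln t2 + k1 t2 * (ln t1 - ln p)"
    if t: "t1 \<in> {0<..<b1}" "t2 \<in> {0<..<b2}" for t1 t2
  proof -
    have "ln (F t1 t2) = \<alpha>1 t2 + k1 t2 * ln t1" using A1[OF t(2)] t by auto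
    moreover have "ln (F p t2) = \<alpha>1 t2 + k1 t2 * ln p" using A1[OF t(2)] pq by auto
    moreover have "ln (F p t2) = \<alpha>2 p + k2 p * ln t2" using A2[OF pq(1)] t by auto
    ultimately show ?thesis by (simp add: algebra_simps)
  qed
  define \<theta> where "\<theta> = B'"
  define c1 where "c1 = A' + B' * ln b2"
  define c2 where "c2 = k2 p + B' * (ln b1 - ln p)"
  define P where "P = \<alpha>2 p + k2 p * ln b2 + (A' + B' * ln b2) * (ln b1 - ln p)"
  have FE: "ln (F t1 t2) = P + c1 * (ln t1 - ln b1) + c2 * (ln t2 - ln b2) + \<theta> * (ln t1 - ln b1) * (ln t2 - ln b2)"
    if t: "t1 \<in> {0<..<b1}" "t2 \<in> {0<..<b2}" for t1 t2
    unfolding Lform[OF t] k1form[OF t(2)] P_def c1_def c2_def \<theta>_def by (simp add: algebra_simps)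
  have k1e: "k1 t2 = c1 + \<theta> * (ln t2 - ln b2)" if t2: "t2 \<in> {0<..<b2}" for t2
    unfolding k1form[OF t2] c1_def \<theta>_def by (simp add: algebra_simps)
  have k2e: "k2 t1 = c2 + \<theta> * (ln t1 - ln b1)" if t1: "t1 \<in> {0<..<b1}" for t1
  proof -
    have s: "b2/2 \<in> {0<..<b2}" "b2/4 \<in> {0<..<b2}" using b_pos by auto
    have "\<alpha>2 t1 + k2 t1 * ln (b2/2) = P + c1 * (ln t1 - ln b1) + c2 * (ln (b2/2) - ln b2) + \<theta> * (ln t1 - ln b1) * (ln (b2/2) - ln b2)"
      using A2[OF t1, of "b2/2"] FE[OF t1 s(1)] s by auto
    moreover have "\<alpha>2 t1 + k2 t1 * ln (b2/4) = P + c1 * (ln t1 - ln b1) + c2 * (ln (b2/4) - ln b2) + \<theta> * (ln t1 - ln b1) * (ln (b2/4) - ln b2)"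
      using A2[OF t1, of "b2/4"] FE[OF t1 s(2)] s by auto
    ultimately have "k2 t1 * (ln (b2/2) - ln (b2/4)) = (c2 + \<theta> * (ln t1 - ln b1)) * (ln (b2/2) - ln (b2/4))"
      by (simp add: algebra_simps)
    moreover have "ln (b2/2) - ln (b2/4) = ln 2" using b_pos ln4 by (simp add: ln_div)
    ultimately show ?thesis by simp
  qed
  have pos1: "0 < c1 + \<theta> * bb" if "bb < 0" for bb
  proof -
    have t2: "b2 * exp bb \<in> {0<..<b2}" using b_pos that by auto
    have "ln (b2 * exp bb) - ln b2 = bb" using b_pos by (simp add: ln_mult)
    then show ?thesis using k1p[OF t2] k1e[OF t2] by simp
  qed
  have pos2: "0 < c2 + \<theta> * a" if "a < 0" for a
  proof -
    have t1: "b1 * exp a \<in> {0<..<b1}" using b_pos that by auto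
    have "ln (b1 * exp a) - ln b1 = a" using b_pos by (simp add: ln_mult)
    then show ?thesis using k2p[OF t1] k2e[OF t1] by simp
  qed
  have th: "\<theta> \<le> 0"
  proof (rule ccontr)
    assume "\<not> \<theta> \<le> 0"
    then have tp: "0 < \<theta>" by simp
    have "-(\<bar>c2\<bar> + 1) / \<theta> < 0" using tp by (simp add: divide_neg_pos add_pos_nonneg)
    from pos2[OF this] tp show False by simp
  qed
  have c1nn: "0 \<le> c1"
  proof (rule ccontr)
    assume "\<not> 0 \<le> c1"
    then have cn: "c1 < 0" by simp
    have d: "0 < 2 * (1 - \<theta>)" using th by simp
    have "c1 / (2 * (1 - \<theta>)) < 0" using cn d by (simp add: divide_neg_pos)
    from pos1[OF this] have e1: "0 < c1 + \<theta> * (c1 / (2 * (1 - \<theta>)))" .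
    have e2: "c1 + \<theta> * (c1 / (2 * (1 - \<theta>))) = c1 * ((2 - \<theta>) / (2 * (1 - \<theta>)))"
      using d by (simp add: field_simps)
    have e3: "c1 * ((2 - \<theta>) / (2 * (1 - \<theta>))) < 0" using cn d th by (intro mult_neg_pos divide_pos_pos) auto
    show False using e1 e2 e3 by linarith
  qed
  have c2nn: "0 \<le> c2"
  proof (rule ccontr)
    assume "\<not> 0 \<le> c2"
    then have cn: "c2 < 0" by simp
    have d: "0 < 2 * (1 - \<theta>)" using th by simp
    have "c2 / (2 * (1 - \<theta>)) < 0" using cn d by (simp add: divide_neg_pos)
    from pos2[OF this] have e1: "0 < c2 + \<theta> * (c2 / (2 * (1 - \<theta>)))" .
    have e2: "c2 + \<theta> * (c2 / (2 * (1 - \<theta>))) = c2 * ((2 - \<theta>) / (2 * (1 - \<theta>)))"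
      using d by (simp add: field_simps)
    have e3: "c2 * ((2 - \<theta>) / (2 * (1 - \<theta>))) < 0" using cn d th by (intro mult_neg_pos divide_pos_pos) auto
    show False using e1 e2 e3 by linarith
  qed
  have Fexp: "F t1 t2 = exp (P + c1 * (ln t1 - ln b1) + c2 * (ln t2 - ln b2) + \<theta> * (ln t1 - ln b1) * (ln t2 - ln b2))"
    if t: "t1 \<in> {0<..<b1}" "t2 \<in> {0<..<b2}" for t1 t2
    using FE[OF t] F_pos t by (metis exp_ln greaterThanLessThan_iff)
  have rect: "{0<..<b1} \<times> {0<..<b2} \<in> sets \<mu>"
    using sets_borel by (simp add: borel_open open_Times)
  have M1: "measure \<mu> ({..<b1} \<times> {..<b2}) = 1"
  proof -
    have "measure \<mu> ({0<..<b1} \<times> {0<..<b2}) \<le> measure \<mu> ({..<b1} \<times> {..<b2})"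
      using sets_borel by (intro finite_measure_mono) (auto simp: borel_open open_Times)
    moreover have "measure \<mu> ({..<b1} \<times> {..<b2}) \<le> 1" by simp
    ultimately show ?thesis using support by simp
  qed
  have M0: "measure \<mu> S = 0" if "S \<subseteq> UNIV - {0<..<b1} \<times> {0<..<b2}" for S
  proof -
    have "measure \<mu> S \<le> measure \<mu> (space \<mu> - {0<..<b1} \<times> {0<..<b2})"
      using that sp sets.compl_sets[OF rect] by (intro finite_measure_mono) auto
    also have "\<dots> = 0" using prob_compl[OF rect] support by simp
    finally show ?thesis using measure_nonneg[of \<mu> S] by simp
  qed
  have P0: "P = 0"
  proof -
    define sq where "sq n = 1 - 1 / (real n + 2)" for n
    have sq: "0 < sq n" "sq n < 1" for n by (auto simp: sq_def)
    define A where "A n = {..b1 * sq n} \<times> {..b2 * sq n}" for n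
    have inc: "incseq A"
    proof (rule incseq_SucI)
      fix n
      have "sq n \<le> sq (Suc n)" unfolding sq_def by (simp add: frac_le)
      then show "A n \<subseteq> A (Suc n)" unfolding A_def using b_pos
        by (auto intro: order_trans mult_left_mono)
    qed
    have rA: "range A \<subseteq> sets \<mu>" unfolding A_def by (auto intro: rs)
    have UA: "(\<Union>n. A n) = {..<b1} \<times> {..<b2}"
    proof
      show "(\<Union>n. A n) \<subseteq> {..<b1} \<times> {..<b2}"
        unfolding A_def using sq b_pos by (force intro: le_less_trans)
      show "{..<b1} \<times> {..<b2} \<subseteq> (\<Union>n. A n)"
      proof
        fix z assume "z \<in> {..<b1} \<times> {..<b2}"
        then obtain x y where z: "z = (x, y)" "x < b1" "y < b2" by auto
        obtain n :: nat where n: "b1 / (b1 - x) + b2 / (b2 - y) < real n" using reals_Archimedean2 by blast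
        have "b1 / (b1 - x) < real n + 2" "b2 / (b2 - y) < real n + 2"
          using n z b_pos by (smt (verit) divide_pos_pos)+
        then have "b1 < (real n + 2) * (b1 - x)" "b2 < (real n + 2) * (b2 - y)"
          using z by (simp_all add: divide_less_eq)
        then have "x \<le> b1 * sq n" "y \<le> b2 * sq n"
          unfolding sq_def by (simp_all add: field_simps)
        then show "z \<in> (\<Union>n. A n)" using z unfolding A_def by auto
      qed
    qed
    have lim1: "(\<lambda>n. measure \<mu> (A n)) \<longlonglongrightarrow> 1"
      using finite_Lim_measure_incseq[OF rA inc] UA M1 by simp
    have eqA: "measure \<mu> (A n) = exp (P + c1 * ln (sq n) + c2 * ln (sq n) + \<theta> * ln (sq n) * ln (sq n))" for n
    proof -
      have t: "b1 * sq n \<in> {0<..<b1}" "b2 * sq n \<in> {0<..<b2}" using sq[of n] b_pos by auto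
      have "measure \<mu> (A n) = F (b1 * sq n) (b2 * sq n)" by (simp add: A_def Fm)
      also have "\<dots> = exp (P + c1 * ln (sq n) + c2 * ln (sq n) + \<theta> * ln (sq n) * ln (sq n))"
        using Fexp[OF t] b_pos sq[of n] by (simp add: ln_mult)
      finally show ?thesis .
    qed
    have "sq \<longlonglongrightarrow> 1" unfolding sq_def by real_asymp
    then have "(\<lambda>n. ln (sq n)) \<longlonglongrightarrow> ln 1" by (intro tendsto_intros) auto
    then have "(\<lambda>n. ln (sq n)) \<longlonglongrightarrow> 0" by simp
    then have "(\<lambda>n. exp (P + c1 * ln (sq n) + c2 * ln (sq n) + \<theta> * ln (sq n) * ln (sq n)))
        \<longlonglongrightarrow> exp (P + c1 * 0 + c2 * 0 + \<theta> * 0 * 0)" by (intro tendsto_intros)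
    then have "(\<lambda>n. measure \<mu> (A n)) \<longlonglongrightarrow> exp P" by (simp add: eqA)
    with lim1 have "exp P = 1" using LIMSEQ_unique by blast
    then show ?thesis by simp
  qed
  have l1: "(\<lambda>n. 1 / (real n + 2)) \<longlonglongrightarrow> 0" by real_asymp
  have l2: "(\<lambda>n. ln (real n + 2) / (real n + 2)) \<longlonglongrightarrow> 0" by real_asymp
  have Inter0: "x \<le> 0" if "\<forall>n. x \<le> b / (real n + 2)" "0 < b" for x b :: real
  proof (rule ccontr)
    assume "\<not> x \<le> 0"
    then have x: "0 < x" by simp
    obtain n :: nat where n: "b / x < real n" using reals_Archimedean2 by blast
    then have "b < real n * x" using x by (simp add: divide_less_eq)
    then have "b < (real n + 2) * x" using x by (simp add: distrib_right)
    then have "b / (real n + 2) < x" by (simp add: divide_less_eq mult.commute)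
    with that(1) show False by (meson not_le)
  qed
  have c1p: "0 < c1"
  proof (rule ccontr)
    assume "\<not> 0 < c1"
    then have c0: "c1 = 0" using c1nn by simp
    define u where "u n = b1 / (real n + 2)" for n
    define v where "v n = b2 * exp (- 1 / (real n + 2))" for n
    have uv: "u n \<in> {0<..<b1}" "v n \<in> {0<..<b2}" for n
      using b_pos by (auto simp: u_def v_def divide_less_eq)
    define D where "D n = {..u n} \<times> (UNIV :: real set)" for n
    have dec: "decseq D"
    proof (rule decseq_SucI)
      fix n show "D (Suc n) \<subseteq> D n" unfolding D_def u_def using b_pos
        by (auto simp: frac_le intro: order_trans)
    qed
    have rD: "range D \<subseteq> sets \<mu>" unfolding D_def by (auto intro: rs)
    have ID: "(\<Inter>n. D n) = {..0} \<times> UNIV"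
    proof
      show "(\<Inter>n. D n) \<subseteq> {..0} \<times> UNIV"
        using Inter0[OF _ b_pos(1)] unfolding D_def u_def by auto
      show "{..0} \<times> UNIV \<subseteq> (\<Inter>n. D n)"
        unfolding D_def u_def using b_pos by (auto intro: order_trans)
    qed
    have "measure \<mu> ({..0} \<times> (UNIV::real set)) = 0" by (rule M0) auto
    then have limD: "(\<lambda>n. measure \<mu> (D n)) \<longlonglongrightarrow> 0"
      using finite_Lim_measure_decseq[OF rD dec] ID by simp
    have le: "F (u n) (v n) \<le> measure \<mu> (D n)" for n
      unfolding Fm D_def by (intro finite_measure_mono rs) auto
    have eqF: "F (u n) (v n) = exp (P + c2 * (- (1 / (real n + 2))) + \<theta> * (ln (real n + 2) / (real n + 2)))" for n
    proof -
      have a: "ln (u n) - ln b1 = - ln (real n + 2)" using b_pos by (simp add: u_def ln_div)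
      have b: "ln (v n) - ln b2 = - (1 / (real n + 2))" using b_pos by (simp add: v_def ln_mult)
      show ?thesis unfolding Fexp[OF uv] a b c0 by simp
    qed
    have "(\<lambda>n. exp (P + c2 * (- (1 / (real n + 2))) + \<theta> * (ln (real n + 2) / (real n + 2))))
        \<longlonglongrightarrow> exp (P + c2 * (- 0) + \<theta> * 0)" by (intro tendsto_intros l1 l2)
    then have limF: "(\<lambda>n. F (u n) (v n)) \<longlonglongrightarrow> exp P" by (simp add: eqF)
    have "exp P \<le> 0" by (rule LIMSEQ_le[OF limF limD]) (use le in auto)
    then show False by simp
  qed
  have c2p: "0 < c2"
  proof (rule ccontr)
    assume "\<not> 0 < c2"
    then have c0: "c2 = 0" using c2nn by simp
    define u where "u n = b1 * exp (- 1 / (real n + 2))" for n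
    define v where "v n = b2 / (real n + 2)" for n
    have uv: "u n \<in> {0<..<b1}" "v n \<in> {0<..<b2}" for n
      using b_pos by (auto simp: u_def v_def divide_less_eq)
    define D where "D n = (UNIV :: real set) \<times> {..v n}" for n
    have dec: "decseq D"
    proof (rule decseq_SucI)
      fix n show "D (Suc n) \<subseteq> D n" unfolding D_def v_def using b_pos
        by (auto simp: frac_le intro: order_trans)
    qed
    have rD: "range D \<subseteq> sets \<mu>" unfolding D_def by (auto intro: rs)
    have ID: "(\<Inter>n. D n) = UNIV \<times> {..0}"
    proof
      show "(\<Inter>n. D n) \<subseteq> UNIV \<times> {..0}"
        using Inter0[OF _ b_pos(2)] unfolding D_def v_def by auto
      show "UNIV \<times> {..0} \<subseteq> (\<Inter>n. D n)"
        unfolding D_def v_def using b_pos by (auto intro: order_trans)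
    qed
    have "measure \<mu> ((UNIV::real set) \<times> {..0}) = 0" by (rule M0) auto
    then have limD: "(\<lambda>n. measure \<mu> (D n)) \<longlonglongrightarrow> 0"
      using finite_Lim_measure_decseq[OF rD dec] ID by simp
    have le: "F (u n) (v n) \<le> measure \<mu> (D n)" for n
      unfolding Fm D_def by (intro finite_measure_mono rs) auto
    have eqF: "F (u n) (v n) = exp (P + c1 * (- (1 / (real n + 2))) + \<theta> * (ln (real n + 2) / (real n + 2)))" for n
    proof -
      have a: "ln (v n) - ln b2 = - ln (real n + 2)" using b_pos by (simp add: v_def ln_div)
      have b: "ln (u n) - ln b1 = - (1 / (real n + 2))" using b_pos by (simp add: u_def ln_mult)
      show ?thesis unfolding Fexp[OF uv] a b c0 by simp
    qed
    have "(\<lambda>n. exp (P + c1 * (- (1 / (real n + 2))) + \<theta> * (ln (real n + 2) / (real n + 2))))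
        \<longlonglongrightarrow> exp (P + c1 * (- 0) + \<theta> * 0)" by (intro tendsto_intros l1 l2)
    then have limF: "(\<lambda>n. F (u n) (v n)) \<longlonglongrightarrow> exp P" by (simp add: eqF)
    have "exp P \<le> 0" by (rule LIMSEQ_le[OF limF limD]) (use le in auto)
    then show False by simp
  qed
  show ?thesis
  proof (intro exI conjI ballI)
    show "\<theta> \<le> 0" "0 < c1" "0 < c2" by fact+
    fix t1 t2 assume t: "t1 \<in> {0<..<b1}" "t2 \<in> {0<..<b2}"
    have "F t1 t2 = exp (c1*(ln t1 - ln b1) + (c2 + \<theta>*(ln t1 - ln b1))*(ln t2 - ln b2))"
      unfolding Fexp[OF t] P0 by (simp add: algebra_simps)
    also have "\<dots> = (t1 / b1) powr c1 * (t2 / b2) powr (c2 + \<theta> * ln (t1 / b1))"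
      using t b_pos by (intro pform[symmetric]) auto
    finally show "F t1 t2 = (t1 / b1) powr c1 * (t2 / b2) powr (c2 + \<theta> * ln (t1 / b1))" .
  qed
qed



theorem mainTheorem16:
  fixes \<mu> :: "(real \<times> real) measure" and b1 b2 :: real
  defines "F \<equiv> bcdf \<mu>"
  assumes prob: "prob_space \<mu>"
    and sets_borel: "sets \<mu> = sets borel"
    and abs_cont: "absolutely_continuous lborel \<mu>"
    and support: "measure \<mu> ({0<..<b1} \<times> {0<..<b2}) = 1"
    and b_pos: "0 < b1" "0 < b2"
    and F_pos: "\<And>t1 t2. 0 < t1 \<Longrightarrow> t1 < b1 \<Longrightarrow> 0 < t2 \<Longrightarrow> t2 < b2 \<Longrightarrow> 0 < F t1 t2"
    and finite1: "\<And>t1 t2. 0 < t1 \<Longrightarrow> t1 < b1 \<Longrightarrow> 0 < t2 \<Longrightarrow> t2 < b2 \<Longrightarrow>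
        interval_lebesgue_integrable lborel 0 (ereal t1) (cdcpe1_integrand F t1 t2)"
    and finite2: "\<And>t1 t2. 0 < t1 \<Longrightarrow> t1 < b1 \<Longrightarrow> 0 < t2 \<Longrightarrow> t2 < b2 \<Longrightarrow>
        interval_lebesgue_integrable lborel 0 (ereal t2) (cdcpe2_integrand F t1 t2)"
  shows
    "((\<exists>cf1 cf2 :: real \<Rightarrow> real.
        (\<forall>t2\<in>{0<..<b2}. cf1 t2 \<in> {0<..<1}) \<and> (\<forall>t1\<in>{0<..<b1}. cf2 t1 \<in> {0<..<1}) \<and>
        (\<forall>t1\<in>{0<..<b1}. \<forall>t2\<in>{0<..<b2}.
           cdcpe1 F t1 t2 = cf1 t2 * mit1 F t1 t2 \<and> cdcpe2 F t1 t2 = cf2 t1 * mit2 F t1 t2))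
     \<longleftrightarrow>
     (\<exists>\<theta> c1 c2 :: real. \<theta> \<le> 0 \<and> 0 < c1 \<and> 0 < c2 \<and>
        (\<forall>t1\<in>{0<..<b1}. \<forall>t2\<in>{0<..<b2}.
           F t1 t2 = (t1 / b1) powr c1 * (t2 / b2) powr (c2 + \<theta> * ln (t1 / b1)))))
   \<and>
    (\<forall>cf1 cf2 :: real \<Rightarrow> real. \<forall>\<theta> c1 c2 :: real.
       ((\<forall>t2\<in>{0<..<b2}. cf1 t2 \<in> {0<..<1}) \<and> (\<forall>t1\<in>{0<..<b1}. cf2 t1 \<in> {0<..<1}) \<and>
        (\<forall>t1\<in>{0<..<b1}. \<forall>t2\<in>{0<..<b2}.
           cdcpe1 F t1 t2 = cf1 t2 * mit1 F t1 t2 \<and> cdcpe2 F t1 t2 = cf2 t1 * mit2 F t1 t2) \<and>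
        \<theta> \<le> 0 \<and> 0 < c1 \<and> 0 < c2 \<and>
        (\<forall>t1\<in>{0<..<b1}. \<forall>t2\<in>{0<..<b2}.
           F t1 t2 = (t1 / b1) powr c1 * (t2 / b2) powr (c2 + \<theta> * ln (t1 / b1))))
       \<longrightarrow> (\<exists>L1 L2. (cf1 \<longlongrightarrow> L1) (at_left b2) \<and> (cf2 \<longlongrightarrow> L2) (at_left b1) \<and>
                    c1 = L1 / (1 - L1) \<and> c2 = L2 / (1 - L2)))"
proof -
  let ?CF = "\<lambda>cf1 cf2. (\<forall>t2\<in>{0<..<b2}. cf1 t2 \<in> {0<..<1}) \<and> (\<forall>t1\<in>{0<..<b1}. cf2 t1 \<in> {0<..<1}) \<and>
        (\<forall>t1\<in>{0<..<b1}. \<forall>t2\<in>{0<..<b2}.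
           cdcpe1 F t1 t2 = cf1 t2 * mit1 F t1 t2 \<and> cdcpe2 F t1 t2 = cf2 t1 * mit2 F t1 t2)"
  let ?PF = "\<lambda>\<theta> c1 c2. \<theta> \<le> 0 \<and> 0 < c1 \<and> 0 < c2 \<and>
        (\<forall>t1\<in>{0<..<b1}. \<forall>t2\<in>{0<..<b2}.
           F t1 t2 = (t1 / b1) powr c1 * (t2 / b2) powr (c2 + \<theta> * ln (t1 / b1)))"
  have bwd: "\<exists>cf1 cf2. ?CF cf1 cf2" if "?PF \<theta> c1 c2" for \<theta> c1 c2
  proof -
    have par: "\<theta> \<le> 0" "0 < c1" "0 < c2" and form: "\<forall>t1\<in>{0<..<b1}. \<forall>t2\<in>{0<..<b2}.
           F t1 t2 = (t1 / b1) powr c1 * (t2 / b2) powr (c2 + \<theta> * ln (t1 / b1))" using that by auto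
    note S = section1[OF b_pos par form]
    let ?f1 = "\<lambda>t2. (c1 + \<theta> * ln (t2/b2)) / (c1 + \<theta> * ln (t2/b2) + 1)"
    let ?f2 = "\<lambda>t1. (c2 + \<theta> * ln (t1/b1)) / (c2 + \<theta> * ln (t1/b1) + 1)"
    have "?CF ?f1 ?f2"
    proof (intro conjI ballI)
      fix t2 assume t2: "t2 \<in> {0<..<b2}"
      have t1: "b1/2 \<in> {0<..<b1}" using b_pos by auto
      show "?f1 t2 \<in> {0<..<1}" using S(3)[OF t1 t2] by auto
    next
      fix t1 assume t1: "t1 \<in> {0<..<b1}"
      have t2: "b2/2 \<in> {0<..<b2}" using b_pos by auto
      show "?f2 t1 \<in> {0<..<1}" using S(6)[OF t1 t2] by auto
    next
      fix t1 t2 assume t: "t1 \<in> {0<..<b1}" "t2 \<in> {0<..<b2}"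
      show "cdcpe1 F t1 t2 = ?f1 t2 * mit1 F t1 t2" by (rule S(1)[OF t])
      show "cdcpe2 F t1 t2 = ?f2 t1 * mit2 F t1 t2" by (rule S(4)[OF t])
    qed
    then show ?thesis by (rule exI[of _ ?f1, OF exI[of _ ?f2]])
  qed
  have lims: "\<exists>L1 L2. (cf1 \<longlongrightarrow> L1) (at_left b2) \<and> (cf2 \<longlongrightarrow> L2) (at_left b1) \<and>
                    c1 = L1 / (1 - L1) \<and> c2 = L2 / (1 - L2)"
    if CF: "?CF cf1 cf2" and PF: "?PF \<theta> c1 c2" for cf1 cf2 \<theta> c1 c2
  proof -
    have par: "\<theta> \<le> 0" "0 < c1" "0 < c2" and form: "\<forall>t1\<in>{0<..<b1}. \<forall>t2\<in>{0<..<b2}.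
           F t1 t2 = (t1 / b1) powr c1 * (t2 / b2) powr (c2 + \<theta> * ln (t1 / b1))" using PF by auto
    note S = section1[OF b_pos par form]
    have e1: "cf1 t2 = (c1 + \<theta> * ln (t2/b2)) / (c1 + \<theta> * ln (t2/b2) + 1)" if t2: "t2 \<in> {0<..<b2}" for t2
    proof -
      have t1: "b1/2 \<in> {0<..<b1}" using b_pos by auto
      have "cf1 t2 * mit1 F (b1/2) t2 = (c1 + \<theta> * ln (t2/b2)) / (c1 + \<theta> * ln (t2/b2) + 1) * mit1 F (b1/2) t2"
        using CF S(1)[OF t1 t2] t1 t2 by auto
      then show ?thesis using S(2)[OF t1 t2] by (metis mult_cancel_right less_irrefl)
    qed
    have e2: "cf2 t1 = (c2 + \<theta> * ln (t1/b1)) / (c2 + \<theta> * ln (t1/b1) + 1)" if t1: "t1 \<in> {0<..<b1}" for t1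
    proof -
      have t2: "b2/2 \<in> {0<..<b2}" using b_pos by auto
      have "cf2 t1 * mit2 F t1 (b2/2) = (c2 + \<theta> * ln (t1/b1)) / (c2 + \<theta> * ln (t1/b1) + 1) * mit2 F t1 (b2/2)"
        using CF S(4)[OF t1 t2] t1 t2 by auto
      then show ?thesis using S(5)[OF t1 t2] by (metis mult_cancel_right less_irrefl)
    qed
    have "((\<lambda>t2. (c1 + \<theta> * ln (t2/b2)) / (c1 + \<theta> * ln (t2/b2) + 1)) \<longlongrightarrow>
           (c1 + \<theta> * ln (b2/b2)) / (c1 + \<theta> * ln (b2/b2) + 1)) (at_left b2)"
      using b_pos par by (intro tendsto_intros) auto
    then have l1: "((\<lambda>t2. (c1 + \<theta> * ln (t2/b2)) / (c1 + \<theta> * ln (t2/b2) + 1)) \<longlongrightarrow> c1 / (c1 + 1)) (at_left b2)"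
      using b_pos by simp
    have "eventually (\<lambda>t2. t2 \<in> {0<..<b2}) (at_left b2)" using b_pos by (intro eventually_at_leftI[of 0]) auto
    then have "eventually (\<lambda>t2. (c1 + \<theta> * ln (t2/b2)) / (c1 + \<theta> * ln (t2/b2) + 1) = cf1 t2) (at_left b2)"
      by (rule eventually_mono) (simp add: e1)
    from tendsto_cong[THEN iffD1, OF this l1] have L1: "(cf1 \<longlongrightarrow> c1 / (c1 + 1)) (at_left b2)" .
    have "((\<lambda>t1. (c2 + \<theta> * ln (t1/b1)) / (c2 + \<theta> * ln (t1/b1) + 1)) \<longlongrightarrow>
           (c2 + \<theta> * ln (b1/b1)) / (c2 + \<theta> * ln (b1/b1) + 1)) (at_left b1)"
      using b_pos par by (intro tendsto_intros) auto
    then have l2: "((\<lambda>t1. (c2 + \<theta> * ln (t1/b1)) / (c2 + \<theta> * ln (t1/b1) + 1)) \<longlongrightarrow> c2 / (c2 + 1)) (at_left b1)"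
      using b_pos by simp
    have "eventually (\<lambda>t1. t1 \<in> {0<..<b1}) (at_left b1)" using b_pos by (intro eventually_at_leftI[of 0]) auto
    then have "eventually (\<lambda>t1. (c2 + \<theta> * ln (t1/b1)) / (c2 + \<theta> * ln (t1/b1) + 1) = cf2 t1) (at_left b1)"
      by (rule eventually_mono) (simp add: e2)
    from tendsto_cong[THEN iffD1, OF this l2] have L2: "(cf2 \<longlongrightarrow> c2 / (c2 + 1)) (at_left b1)" .
    have "c1 = (c1 / (c1 + 1)) / (1 - c1 / (c1 + 1))" "c2 = (c2 / (c2 + 1)) / (1 - c2 / (c2 + 1))"
      using par by (simp_all add: field_simps)
    then show ?thesis using L1 L2 by blast
  qed
  have fwd: "\<exists>\<theta> c1 c2. ?PF \<theta> c1 c2" if "?CF cf1 cf2" for cf1 cf2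
    by (rule fwd_dir[OF F_def[THEN meta_eq_to_obj_eq] prob sets_borel support b_pos F_pos that])
  show ?thesis
    apply (rule conjI)
    subgoal using bwd fwd by blast
    apply (intro allI impI)
    subgoal for cf1 cf2 \<theta> c1 c2 using lims[of cf1 cf2 \<theta> c1 c2] by blast
    done
qed


end
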